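(* There is an absolute constant $c>0$ such that for all integers $n\ge1$, $m\ge2$: if $X\sim\mathcal{D}^n$ and $\varepsilon_0=\sqrt{\log_2 m}/m$, then for every $x\in S^{n-1}$ and every $\varepsilon\ge\varepsilon_0$, $$\Pr[|\langle X,x\rangle|\le\varepsilon]\le c\varepsilon.$$
   Context: For an integer $m\ge1$, $\mathcal{D}$ denotes the uniform distribution on $\{a/m: a\in\{-m,\ldots,m\}\}$, and $\mathcal{D}^n$ the distribution of a random vector in $\mathbb{R}^n$ with independent $\mathcal{D}$-distributed coordinates. $S^{n-1}=\{x\in\mathbb{R}^n:\|x\|_2=1\}$. *)

theory Defs
  imports "HOL-Probability.Probability"
begin

definition D_pmf :: "nat \<Rightarrow> real pmf" where
  "D_pmf m = pmf_of_set ((\<lambda>a::int. real_of_int a / real m) ` {-int m..int m})"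

text \<open>D^n: vectors in R^n (coordinates indexed by {..<n}, default 0 elsewhere)
  with independent D-distributed coordinates.\<close>
definition Dn_pmf :: "nat \<Rightarrow> nat \<Rightarrow> (nat \<Rightarrow> real) pmf" where
  "Dn_pmf n m = Pi_pmf {..<n} 0 (\<lambda>_. D_pmf m)"

end

theory Submission
  imports Defs "HOL-Analysis.Analysis"
begin


lemma cos_lower_nonneg: assumes "0 \<le> (x::real)" shows "1 - x^2/2 \<le> cos x"
proof -
  have "(\<lambda>t. cos t - 1 + t^2/2) 0 \<le> (\<lambda>t. cos t - 1 + t^2/2) x"
  proof (rule DERIV_nonneg_imp_nondecreasing[OF assms])
    fix t :: real assume "0 \<le> t" "t \<le> x"
    show "\<exists>y. ((\<lambda>t. cos t - 1 + t^2/2) has_real_derivative y) (at t) \<and> 0 \<le> y"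
      by (rule exI[of _ "- sin t + t"], auto intro!: derivative_eq_intros simp: sin_x_le_x \<open>0 \<le> t\<close>)
  qed
  thus ?thesis by simp
qed

lemma cos_lower: "1 - (x::real)^2/2 \<le> cos x"
  using cos_lower_nonneg[of "\<bar>x\<bar>"] by (cases "x \<ge> 0") auto

lemma sin_lower_nonneg: assumes "0 \<le> (x::real)" shows "x - x^3/6 \<le> sin x"
proof -
  have "(\<lambda>t. sin t - t + t^3/6) 0 \<le> (\<lambda>t. sin t - t + t^3/6) x"
  proof (rule DERIV_nonneg_imp_nondecreasing[OF assms])
    fix t :: real assume "0 \<le> t" "t \<le> x"
    show "\<exists>y. ((\<lambda>t. sin t - t + t^3/6) has_real_derivative y) (at t) \<and> 0 \<le> y"
      using cos_lower[of t] by (intro exI[of _ "cos t - 1 + t^2/2"]) (auto intro!: derivative_eq_intros)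
  qed
  thus ?thesis by simp
qed

lemma cos_upper_nonneg: assumes "0 \<le> (x::real)" shows "cos x \<le> 1 - x^2/2 + x^4/24"
proof -
  have "(\<lambda>t. 1 - t^2/2 + t^4/24 - cos t) 0 \<le> (\<lambda>t. 1 - t^2/2 + t^4/24 - cos t) x"
  proof (rule DERIV_nonneg_imp_nondecreasing[OF assms])
    fix t :: real assume "0 \<le> t" "t \<le> x"
    show "\<exists>y. ((\<lambda>t. 1 - t^2/2 + t^4/24 - cos t) has_real_derivative y) (at t) \<and> 0 \<le> y"
      using sin_lower_nonneg[OF \<open>0 \<le> t\<close>] by (intro exI[of _ "- t + t^3/6 + sin t"]) (auto intro!: derivative_eq_intros)
  qed
  thus ?thesis by simp
qed

lemma cos_upper: "cos (x::real) \<le> 1 - x^2/2 + x^4/24"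
  using cos_upper_nonneg[of "\<bar>x\<bar>"] by (cases "x \<ge> 0") auto



lemma int_range_Suc: "{-int (Suc m)..int (Suc m)} = insert (int m + 1) (insert (-(int m + 1)) {-int m..int m})"
  by auto

lemma sum_sq_range: "(\<Sum>a\<in>{-int m..int m}. (real_of_int a)^2) = real m * (real m + 1) * (2 * real m + 1) / 3"
proof (induction m)
  case 0 then show ?case by simp
next
  case (Suc m)
  show ?case unfolding int_range_Suc using Suc by (simp add: algebra_simps power2_eq_square)
qed

lemma sum_sin_range: "(\<Sum>a\<in>{-int m..int m}. sin (real_of_int a * t)) = 0"
proof (induction m)
  case 0 then show ?case by simp
next
  case (Suc m)
  have h: "-t - t*real m = -(t + t*real m)" by simp
  have "sin (-t - t*real m) = - sin(t + t*real m)" by (subst h, rule sin_minus)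
  then show ?case unfolding int_range_Suc using Suc by (simp add: algebra_simps)
qed

lemma trig_aux: "2 * sin (A - B) + 4 * sin B * cos A = 2 * sin (A + (B::real))"
  by (simp add: sin_add sin_diff algebra_simps)

lemma dirichlet: "2 * sin (t/2) * (\<Sum>a\<in>{-int m..int m}. cos (real_of_int a * t)) = 2 * sin ((real m + 1/2) * t)"
proof (induction m)
  case 0 then show ?case by simp
next
  case (Suc m)
  have e1: "(real (Suc m) + 1/2) * t = (real m + 1) * t + t/2" by (simp add: algebra_simps)
  have e2: "(real m + 1/2) * t = (real m + 1) * t - t/2" by (simp add: algebra_simps)
  have "2 * sin (t/2) * (\<Sum>a\<in>{-int (Suc m)..int (Suc m)}. cos (real_of_int a * t))
      = 2 * sin (t/2) * (\<Sum>a\<in>{-int m..int m}. cos (real_of_int a * t)) + 4 * sin (t/2) * cos ((real m + 1) * t)"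
    proof -
      have h: "-t - t*real m = -(t + t*real m)" by simp
      have "cos (-t - t*real m) = cos(t + t*real m)" by (subst h, rule cos_minus)
      then show ?thesis unfolding int_range_Suc by (simp add: algebra_simps)
    qed
  also have "\<dots> = 2 * sin ((real m + 1) * t - t/2) + 4 * sin (t/2) * cos ((real m + 1) * t)"
    using Suc e2 by simp
  also have "\<dots> = 2 * sin ((real m + 1) * t + t/2)"
    by (rule trig_aux)
  finally show ?case using e1 by simp
qed



definition cf :: "nat \<Rightarrow> real \<Rightarrow> real" where
  "cf m u = (\<Sum>a\<in>{-int m..int m}. cos (real_of_int a * (u / real m))) / (2*real m+1)"

lemma card_range: "card {-int m..int m} = 2*m+1" by simp

lemma cf_even: "cf m (-u) = cf m u"
proof -
  have "cos (real_of_int a * (- u / real m)) = cos (real_of_int a * (u / real m))" for a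
    by (metis cos_minus minus_divide_left mult_minus_right)
  then show ?thesis unfolding cf_def by simp
qed

lemma cf_zero: "cf m 0 = 1"
  unfolding cf_def by simp

lemma cf_abs_le1: "\<bar>cf m u\<bar> \<le> 1"
proof -
  have "\<bar>\<Sum>a\<in>{-int m..int m}. cos (real_of_int a * (u / real m))\<bar> \<le> (\<Sum>a\<in>{-int m..int m}. 1)"
    by (rule order.trans[OF sum_abs]) (intro sum_mono, simp)
  also have "\<dots> = 2*real m+1" by simp
  finally have h: "\<bar>\<Sum>a\<in>{-int m..int m}. cos (real_of_int a * (u / real m))\<bar> \<le> 2*real m+1" .
  have "\<bar>cf m u\<bar> = \<bar>\<Sum>a\<in>{-int m..int m}. cos (real_of_int a * (u / real m))\<bar> / (2*real m+1)"
    unfolding cf_def by (simp add: abs_divide)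
  also have "\<dots> \<le> 1" using h by simp
  finally show ?thesis .
qed

lemma cf_small:
  assumes m: "m \<ge> 1" and u: "\<bar>u\<bar> \<le> 3/2"
  shows "0 \<le> cf m u \<and> cf m u \<le> exp (-(u^2/9))"
proof -
  have pi2: "3/2 \<le> pi/2" using pi_gt3 by simp
  define M where "M = real m"
  have mpos: "M > 0" using m unfolding M_def by simp
  have av: "\<bar>real_of_int a * (u / M)\<bar> \<le> \<bar>u\<bar>" if "a \<in> {-int m..int m}" for a
  proof -
    have "\<bar>real_of_int a\<bar> \<le> M" using that unfolding M_def by auto
    then have "\<bar>real_of_int a\<bar> * (\<bar>u\<bar> / M) \<le> M * (\<bar>u\<bar> / M)" by (intro mult_right_mono) auto
    also have "M * (\<bar>u\<bar> / M) = \<bar>u\<bar>" using mpos by simp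
    finally show ?thesis using mpos by (simp add: abs_mult abs_divide)
  qed
  have c0: "0 \<le> cos (real_of_int a * (u / M))" if "a \<in> {-int m..int m}" for a
  proof -
    have "\<bar>real_of_int a * (u / M)\<bar> \<le> pi/2" using av[OF that] u pi2 by linarith
    then have h1: "-(pi/2) \<le> real_of_int a * (u / M)" and h2: "real_of_int a * (u / M) \<le> pi/2"
      by (simp_all only: abs_le_iff) linarith+
    show ?thesis by (rule cos_ge_zero[OF h1 h2])
  qed
  have c1: "cos (real_of_int a * (u / M)) \<le> 1 - (real_of_int a)^2 * (u^2 / (3 * M^2))"
    if "a \<in> {-int m..int m}" for a
  proof -
    define v where "v = real_of_int a * (u / M)"
    have "\<bar>v\<bar> \<le> 3/2" using av[OF that] u unfolding v_def by linarith
    then have "\<bar>v\<bar>^2 \<le> (3/2)^2" by (intro power_mono) auto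
    then have "v^2 \<le> 9/4" by (simp add: power2_eq_square)
    then have h1: "v^2 * v^2 \<le> 9/4 * v^2" by (intro mult_right_mono) auto
    have h2: "v^4 = v^2 * v^2" by algebra
    have h3: "0 \<le> v^2" by simp
    have cv: "cos v \<le> 1 - v^2/3" using cos_upper[of v] h1 h2 h3 by linarith
    have e: "(real_of_int a)^2 * (u^2 / (3 * M^2)) = v^2/3" unfolding v_def
      by (simp add: power_mult_distrib power_divide)
    have "cos (real_of_int a * (u / M)) = cos v" unfolding v_def ..
    then show ?thesis using cv e by linarith
  qed
  define Sm where "Sm = (\<Sum>a\<in>{-int m..int m}. cos (real_of_int a * (u / M)))"
  have cfS: "cf m u = Sm / (2*M+1)" unfolding cf_def Sm_def M_def by simp
  have s0: "0 \<le> Sm" unfolding Sm_def using c0 by (intro sum_nonneg) auto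
  define C where "C = u^2 / (3 * M^2)"
  define Q where "Q = (\<Sum>a\<in>{-int m..int m}. (real_of_int a)^2)"
  have st1: "Sm \<le> (\<Sum>a\<in>{-int m..int m}. 1 - (real_of_int a)^2 * C)"
    unfolding Sm_def C_def using c1 by (intro sum_mono) auto
  have st2: "(\<Sum>a\<in>{-int m..int m}. 1 - (real_of_int a)^2 * C) = (2*M+1) - Q * C"
  proof -
    have "(\<Sum>a\<in>{-int m..int m}. 1 - (real_of_int a)^2 * C) = (\<Sum>a\<in>{-int m..int m}. (1::real)) - (\<Sum>a\<in>{-int m..int m}. (real_of_int a)^2 * C)"
      by (rule sum_subtractf)
    also have "(\<Sum>a\<in>{-int m..int m}. (1::real)) = 2*M+1" unfolding M_def by simp
    also have "(\<Sum>a\<in>{-int m..int m}. (real_of_int a)^2 * C) = Q * C" unfolding Q_def by (rule sum_distrib_right[symmetric])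
    finally show ?thesis .
  qed
  have Qv: "Q = M * (M + 1) * (2 * M + 1) / 3" unfolding Q_def M_def by (rule sum_sq_range)
  have QC: "Q * C = (2*M+1) * (u^2/9 * ((M+1)/M))"
    unfolding Qv C_def using mpos by (simp add: power2_eq_square)
  have ge1: "u^2/9 * 1 \<le> u^2/9 * ((M+1)/M)"
    using mpos by (intro mult_left_mono) auto
  have ge2: "(2*M+1) * (u^2/9) \<le> (2*M+1) * (u^2/9 * ((M+1)/M))"
    using ge1 mpos by (intro mult_left_mono) auto
  have eq3: "(2*M+1) * (1 - u^2/9) = (2*M+1) - (2*M+1) * (u^2/9)" by (simp add: algebra_simps)
  have "Sm \<le> (2*M+1) * (1 - u^2/9)" using st1 st2 QC ge2 eq3 by linarith
  then have "cf m u \<le> 1 - u^2/9" unfolding cfS using mpos by (simp add: divide_le_eq mult.commute)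
  also have "\<dots> \<le> exp (-(u^2/9))" using exp_ge_add_one_self[of "-(u^2/9)"] by simp
  finally show ?thesis using s0 mpos unfolding cfS by simp
qed

lemma frac_cross: "0 < b \<Longrightarrow> 0 < d \<Longrightarrow> a * d \<le> c * b \<Longrightarrow> a / b \<le> c / (d::real)"
  by (simp add: field_simps)

lemma cf_large_pos:
  assumes m: "m \<ge> 1" and u: "0 < u" "u \<le> real m"
  shows "\<bar>cf m u\<bar> \<le> 21 / (20 * u)"
proof -
  have mpos: "real m > 0" using m by simp
  define x where "x = u / (2 * real m)"
  have x0: "0 < x" and x1: "x \<le> 1/2" using u mpos unfolding x_def by (auto simp: field_simps)
  have "x*x \<le> (1/2)*(1/2)" using x0 x1 by (intro mult_mono) auto
  then have "x*(x*x) \<le> x * ((1/2)*(1/2))" using x0 by (intro mult_left_mono) auto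
  then have "x^3 \<le> x * (1/2)^2" by (simp add: power3_eq_cube power2_eq_square)
  then have sx: "23/24 * x \<le> sin x" using sin_lower_nonneg[of x] x0 by (simp add: power2_eq_square)
  have sp: "0 < sin x" using sx x0 by simp
  have "2 * sin x * (\<Sum>a\<in>{-int m..int m}. cos (real_of_int a * (u / real m))) = 2 * sin ((real m + 1/2) * (u / real m))"
    using dirichlet[of "u / real m" m] unfolding x_def by (simp add: field_simps)
  then have "sin x * (\<Sum>a\<in>{-int m..int m}. cos (real_of_int a * (u / real m))) = sin ((real m + 1/2) * (u / real m))"
    by simp
  then have "\<bar>sin x\<bar> * \<bar>\<Sum>a\<in>{-int m..int m}. cos (real_of_int a * (u / real m))\<bar> \<le> 1"
    by (metis abs_mult abs_sin_le_one)
  then have "\<bar>\<Sum>a\<in>{-int m..int m}. cos (real_of_int a * (u / real m))\<bar> \<le> 1 / sin x"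
    using sp by (simp add: pos_le_divide_eq mult.commute)
  also have "\<dots> \<le> 1 / (23/24 * x)" using sx x0 by (intro divide_left_mono) auto
  also have "\<dots> = 48 * real m / (23 * u)" unfolding x_def using mpos u by simp
  finally have s1: "\<bar>\<Sum>a\<in>{-int m..int m}. cos (real_of_int a * (u / real m))\<bar> \<le> 48 * real m / (23 * u)" .
  have "\<bar>cf m u\<bar> = \<bar>\<Sum>a\<in>{-int m..int m}. cos (real_of_int a * (u / real m))\<bar> / (2 * real m + 1)"
    unfolding cf_def by (simp add: abs_divide)
  also have "\<dots> \<le> (48 * real m / (23 * u)) / (2 * real m + 1)"
    using s1 mpos by (intro divide_right_mono) auto
  also have "\<dots> \<le> 21 / (20 * u)"
  proof -
    have "0 \<le> real m * u" using mpos u by simp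
    then have "48 * real m * (20 * u) \<le> 21 * (23 * u * (2 * real m + 1))"
      using u by (simp add: algebra_simps)
    then have "48 * real m / (23 * u * (2 * real m + 1)) \<le> 21 / (20 * u)"
      using u mpos by (intro frac_cross) auto
    then show ?thesis by (simp add: mult.commute mult.left_commute)
  qed
  finally show ?thesis .
qed

lemma cf_large:
  assumes m: "m \<ge> 1" and u: "u \<noteq> 0" "\<bar>u\<bar> \<le> real m"
  shows "\<bar>cf m u\<bar> \<le> 21 / (20 * \<bar>u\<bar>)"
proof (cases "u > 0")
  case True then show ?thesis using cf_large_pos[OF m] u by auto
next
  case False then show ?thesis using cf_large_pos[OF m, of "-u"] u cf_even[of m u] by auto
qed



lemma geom_exp_bound: "(\<Sum>d<N. exp (-(real d / 9))) \<le> 10"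
proof -
  define q where "q = exp (-(1/9::real))"
  have q0: "0 < q" unfolding q_def by simp
  have "exp (1/9::real) \<ge> 1 + 1/9" using exp_ge_add_one_self[of "1/9::real"] by simp
  then have q1: "q \<le> 9/10" unfolding q_def by (simp add: exp_minus field_simps)
  have "exp (-(real d / 9)) = q ^ d" for d
    unfolding q_def by (simp add: exp_of_nat_mult[symmetric])
  then have "(\<Sum>d<N. exp (-(real d / 9))) = (\<Sum>d<N. q ^ d)" by simp
  also have "\<dots> = (1 - q^N) / (1 - q)" using q1 by (simp add: sum_gp_strict)
  also have "\<dots> \<le> 1 / (1 - q)" using q0 q1 by (intro divide_right_mono) auto
  also have "\<dots> \<le> 10" using q1 by (simp add: field_simps)
  finally show ?thesis .
qed

lemma tail_sq_aux:
  assumes "a \<ge> (2::nat)"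
  shows "(\<Sum>d\<in>{a..<N}. 1 / (real d)^2) \<le> 1 / (real a - 1) - (if N \<ge> a then 1 / (real N - 1) else 0)"
proof (induction N)
  case 0 then show ?case using assms by simp
next
  case (Suc N)
  show ?case
  proof (cases "N \<ge> a")
    case True
    have N2: "real N \<ge> 2" using True assms by simp
    have "(\<Sum>d\<in>{a..<Suc N}. 1 / (real d)^2) = (\<Sum>d\<in>{a..<N}. 1 / (real d)^2) + 1 / (real N)^2"
      using True by simp
    also have "\<dots> \<le> 1 / (real a - 1) - 1 / (real N - 1) + 1 / (real N)^2" using Suc True by simp
    also have "\<dots> \<le> 1 / (real a - 1) - 1 / (real (Suc N) - 1)"
    proof -
      have "1 / (real N)^2 \<le> 1 / (real N - 1) - 1 / real N" using N2
        by (simp add: field_simps power2_eq_square)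
      then show ?thesis by simp
    qed
    finally show ?thesis using True by simp
  next
    case False
    then have e: "{a..<Suc N} = {}" by auto
    show ?thesis
    proof (cases "Suc N \<ge> a")
      case True then have "Suc N = a" using False by simp
      then show ?thesis using e by simp
    next
      case False then show ?thesis using e assms by simp
    qed
  qed
qed

lemma tail_sq:
  assumes "a \<ge> (2::nat)"
  shows "(\<Sum>d\<in>{a..<N}. 1 / (real d)^2) \<le> 1 / (real a - 1)"
proof -
  have "0 \<le> (if N \<ge> a then 1 / (real N - 1) else 0)" using assms by auto
  then show ?thesis using tail_sq_aux[OF assms, of N] by linarith
qed

lemma powr_07: assumes "s \<ge> 0" shows "(7/10::real) powr s \<le> 1 / (1 + 3/10 * s)"
proof -
  have l: "ln (7/10::real) \<le> -3/10" using ln_le_minus_one[of "7/10::real"] by simp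
  have "(7/10::real) powr s = exp (s * ln (7/10))" by (simp add: powr_def)
  also have "\<dots> \<le> exp (-(3/10 * s))" using mult_left_mono[OF l assms] by (intro exp_mono) simp
  also have "\<dots> = 1 / exp (3/10 * s)" by (simp add: exp_minus field_simps)
  also have "\<dots> \<le> 1 / (1 + 3/10 * s)" using exp_ge_add_one_self[of "3/10 * s"] assms
    by (intro divide_left_mono) auto
  finally show ?thesis .
qed



lemma B_bound:
  assumes m: "m \<ge> 1" and y: "y \<noteq> 0" "y^2 \<le> 1/2" and N: "N \<le> m"
  shows "(\<Sum>d<N. \<bar>cf m (real d * y)\<bar> powr (1/y^2)) \<le> 15"
proof -
  define p where "p = 1/y^2"
  have y2pos: "y^2 > 0" using y by simp
  have p2: "p \<ge> 2" unfolding p_def using y y2pos by (simp add: field_simps)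
  have py: "p * y^2 = 1" unfolding p_def using y2pos by simp
  have ay: "\<bar>y\<bar> \<le> 3/4"
  proof (rule ccontr)
    assume "\<not> \<bar>y\<bar> \<le> 3/4"
    then have "(3/4)^2 < \<bar>y\<bar>^2" by (intro power_strict_mono) auto
    moreover have "(3/4::real)^2 = 9/16" by (simp add: power2_eq_square)
    ultimately show False using y by simp
  qed
  have aypos: "\<bar>y\<bar> > 0" using y by simp
  define K where "K = 3 / (2 * \<bar>y\<bar>)"
  have K2: "K \<ge> 2" unfolding K_def using ay aypos by (simp add: field_simps)
  define a where "a = nat \<lfloor>K\<rfloor> + 1"
  have fK: "real_of_int \<lfloor>K\<rfloor> > K - 1" by linarith
  have a_eq: "real a - 1 = real_of_int \<lfloor>K\<rfloor>" unfolding a_def using K2 by simp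
  have a2: "a \<ge> 2" unfolding a_def using K2 by linarith
  define q where "q = (7/10::real) powr (p - 2)"
  have q0: "q \<ge> 0" unfolding q_def by simp
  have qp: "q * p \<le> 10/3"
  proof -
    have "q \<le> 1 / (1 + 3/10 * (p - 2))" unfolding q_def using powr_07[of "p-2"] p2 by simp
    then have "q * p \<le> (1 / (1 + 3/10 * (p - 2))) * p" using p2 by (intro mult_right_mono) auto
    also have "\<dots> = p / (1 + 3/10 * (p - 2))" by simp
    also have "\<dots> \<le> 10/3" using p2 by (simp add: field_simps)
    finally show ?thesis .
  qed
  have pt: "\<bar>cf m (real d * y)\<bar> powr p \<le> exp (-(real d / 9)) + (if d \<in> {a..<N} then (21/20)^2 * q * p / (real d)^2 else 0)"
    if dN: "d < N" for d
  proof (cases "\<bar>real d * y\<bar> \<le> 3/2")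
    case True
    have c: "\<bar>cf m (real d * y)\<bar> \<le> exp (-((real d * y)^2/9))" using cf_small[OF m True] by simp
    have "\<bar>cf m (real d * y)\<bar> powr p \<le> exp (-((real d * y)^2/9)) powr p"
      using c p2 by (intro powr_mono2) auto
    also have "\<dots> = exp (-((real d)^2 / 9))" 
      using py by (simp add: powr_def power_mult_distrib algebra_simps)
    also have "\<dots> \<le> exp (-(real d / 9))"
    proof -
      have "real d \<le> (real d)^2" by (cases d) (auto simp: power2_eq_square)
      then show ?thesis by simp
    qed
    moreover have "0 \<le> (if d \<in> {a..<N} then (21/20)^2 * q * p / (real d)^2 else 0)"
      using q0 p2 by auto
    ultimately show ?thesis by linarith
  next
    case False
    have dy: "real d * \<bar>y\<bar> > 3/2" using False by (simp add: abs_mult)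
    have dK: "real d > K" unfolding K_def using dy aypos by (simp add: field_simps)
    have f1: "real_of_int \<lfloor>K\<rfloor> < real d" using dK of_int_floor_le[of K] by linarith
    then have f2: "\<lfloor>K\<rfloor> < int d" by (metis of_int_less_iff of_int_of_nat_eq)
    have "0 \<le> \<lfloor>K\<rfloor>" using K2 by simp
    then have "nat \<lfloor>K\<rfloor> < d" using f2 by (simp add: nat_less_iff)
    then have da: "d \<ge> a" unfolding a_def by simp
    have dpos: "real d > 0" using dK K2 by simp
    have ule: "\<bar>real d * y\<bar> \<le> real m"
    proof -
      have "\<bar>real d * y\<bar> = real d * \<bar>y\<bar>" by (simp add: abs_mult)
      also have "\<dots> \<le> real d * 1" using ay by (intro mult_left_mono) auto
      also have "\<dots> \<le> real m" using dN N by simp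
      finally show ?thesis .
    qed
    have c1: "\<bar>cf m (real d * y)\<bar> \<le> 21 / (20 * \<bar>real d * y\<bar>)"
      using cf_large[OF m _ ule] dpos y by simp
    have c2: "21 / (20 * \<bar>real d * y\<bar>) \<le> 7/10"
    proof -
      have w: "3/2 < \<bar>real d * y\<bar>" using False by linarith
      then have "21 / (20 * \<bar>real d * y\<bar>) \<le> 21 / (20 * (3/2))"
        using dpos by (intro divide_left_mono mult_left_mono) auto
      then show ?thesis by simp
    qed
    define c where "c = \<bar>cf m (real d * y)\<bar>"
    have "c powr p \<le> (21/20)^2 * q * p / (real d)^2"
    proof (cases "c = 0")
      case True then show ?thesis using q0 p2 by simp
    next
      case False
      then have cpos: "c > 0" unfolding c_def by simp
      have "c powr p = c powr 2 * c powr (p - 2)" by (simp add: powr_add[symmetric])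
      also have "\<dots> = c^2 * c powr (p - 2)" using cpos by (simp add: powr_numeral)
      also have "\<dots> \<le> (21 / (20 * \<bar>real d * y\<bar>))^2 * q" unfolding q_def
        using c1 c2 cpos p2 unfolding c_def[symmetric]
        by (intro mult_mono power_mono powr_mono2) auto
      also have "(21 / (20 * \<bar>real d * y\<bar>))^2 = (21/20)^2 * p / (real d)^2"
        unfolding p_def by (simp add: power_divide power_mult_distrib field_simps)
      finally show ?thesis by (simp add: mult.commute mult.left_commute)
    qed
    moreover have "(if d \<in> {a..<N} then (21/20)^2 * q * p / (real d)^2 else 0) = (21/20)^2 * q * p / (real d)^2"
      using da dN by simp
    moreover have "0 \<le> exp (-(real d / 9))" by simp
    ultimately show ?thesis unfolding c_def by linarith
  qed
  have "(\<Sum>d<N. \<bar>cf m (real d * y)\<bar> powr (1/y^2)) \<le> (\<Sum>d<N. exp (-(real d / 9)) + (if d \<in> {a..<N} then (21/20)^2 * q * p / (real d)^2 else 0))"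
    using pt unfolding p_def by (intro sum_mono) auto
  also have "\<dots> = (\<Sum>d<N. exp (-(real d / 9))) + (\<Sum>d\<in>{a..<N}. (21/20)^2 * q * p / (real d)^2)"
  proof -
    have hh: "(\<Sum>d<N. (if d \<in> {a..<N} then g d else 0)) = (\<Sum>d\<in>{a..<N}. g d)" for g :: "nat \<Rightarrow> real"
    proof -
      have "(\<Sum>d<N. (if d \<in> {a..<N} then g d else 0)) = sum g ({..<N} \<inter> {a..<N})"
        by (rule sum.inter_restrict[symmetric]) simp
      also have "{..<N} \<inter> {a..<N} = {a..<N}" by auto
      finally show ?thesis .
    qed
    show ?thesis by (simp only: sum.distrib hh)
  qed
  also have "(\<Sum>d\<in>{a..<N}. (21/20)^2 * q * p / (real d)^2) = (21/20)^2 * q * p * (\<Sum>d\<in>{a..<N}. 1 / (real d)^2)"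
    by (simp add: sum_distrib_left)
  also have "\<dots> \<le> (21/20)^2 * q * p * (1 / (real a - 1))"
    using tail_sq[OF a2, of N] q0 p2 by (intro mult_left_mono) auto
  also have "\<dots> \<le> (21/20)^2 * q * p * 1"
  proof -
    have ai: "1 / (real a - 1) \<le> 1"
      using a_eq fK K2 by (simp add: field_simps)
    show ?thesis using q0 p2 by (intro mult_left_mono[OF ai]) auto
  qed
  finally have "(\<Sum>d<N. \<bar>cf m (real d * y)\<bar> powr (1/y^2)) \<le> (\<Sum>d<N. exp (-(real d / 9))) + (21/20)^2 * (q * p)"
    by (simp add: mult.assoc)
  also have "\<dots> \<le> 10 + (21/20)^2 * (10/3)"
    using geom_exp_bound[of N] qp by (intro add_mono mult_left_mono) auto
  also have "\<dots> \<le> 15" by (simp add: power2_eq_square)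
  finally show ?thesis .
qed



definition Vset :: "nat \<Rightarrow> real set" where
  "Vset m = (\<lambda>a::int. real_of_int a / real m) ` {-int m..int m}"

definition Om :: "nat \<Rightarrow> nat \<Rightarrow> (nat \<Rightarrow> real) set" where
  "Om n m = PiE_dflt {..<n} 0 (\<lambda>_. Vset m)"

lemma inj_V: "m \<ge> 1 \<Longrightarrow> inj_on (\<lambda>a::int. real_of_int a / real m) A"
  by (auto simp: inj_on_def)

lemma finite_V: "finite (Vset m)" unfolding Vset_def by simp
lemma V_ne: "Vset m \<noteq> {}" unfolding Vset_def by auto
lemma card_V: "m \<ge> 1 \<Longrightarrow> card (Vset m) = 2*m+1"
  unfolding Vset_def by (subst card_image[OF inj_V]) auto

lemma finite_Om: "finite (Om n m)" unfolding Om_def using finite_V by auto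
lemma Om_ne: "Om n m \<noteq> {}" unfolding Om_def using V_ne by simp
lemma card_Om: "m \<ge> 1 \<Longrightarrow> card (Om n m) = (2*m+1)^n"
  unfolding Om_def by (subst card_PiE_dflt) (auto simp: finite_V card_V)

lemma Dn_eq: "Dn_pmf n m = pmf_of_set (Om n m)"
  unfolding Dn_pmf_def D_pmf_def Om_def Vset_def
  by (rule Pi_pmf_of_set) auto

lemma prob_Dn: "measure_pmf.prob (Dn_pmf n m) E = card (Om n m \<inter> E) / card (Om n m)"
  by (simp only: Dn_eq measure_pmf_of_set[OF Om_ne finite_Om])

lemma sum_PiE_dflt_prod:
  fixes f :: "'a \<Rightarrow> 'b \<Rightarrow> 'c :: comm_semiring_1"
  assumes "finite A" "\<And>x. x \<in> A \<Longrightarrow> finite (B x)"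
  shows "(\<Sum>g\<in>PiE_dflt A d B. \<Prod>i\<in>A. f i (g i)) = (\<Prod>i\<in>A. \<Sum>v\<in>B i. f i v)"
proof -
  have "(\<Prod>i\<in>A. \<Sum>v\<in>B i. f i v) = (\<Sum>g\<in>PiE A B. \<Prod>i\<in>A. f i (g i))"
    by (rule prod_sum_PiE[OF assms])
  also have "PiE A B = (\<lambda>h. restrict h A) ` PiE_dflt A d B"
    by (rule restrict_PiE_dflt [symmetric])
  also have "(\<Sum>g\<in>\<dots>. \<Prod>i\<in>A. f i (g i)) = (\<Sum>g\<in>PiE_dflt A d B. \<Prod>i\<in>A. f i (restrict g A i))"
    by (subst sum.reindex) (force simp: inj_on_def restrict_def fun_eq_iff PiE_dflt_def, simp)
  also have "\<dots> = (\<Sum>g\<in>PiE_dflt A d B. \<Prod>i\<in>A. f i (g i))"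
    by (intro sum.cong prod.cong) auto
  finally show ?thesis by simp
qed

lemma cis_sum: "finite A \<Longrightarrow> cis (\<Sum>i\<in>A. f i) = (\<Prod>i\<in>A. cis (f i))"
  by (induction A rule: finite_induct) (auto simp: cis_mult[symmetric])

lemma sum_cis_V:
  assumes m: "m \<ge> 1"
  shows "(\<Sum>v\<in>Vset m. cis (t * v * y)) = complex_of_real ((2*real m+1) * cf m (t * y))"
proof -
  have "(\<Sum>v\<in>Vset m. cis (t * v * y)) = (\<Sum>a\<in>{-int m..int m}. cis (real_of_int a * (t * y / real m)))"
    unfolding Vset_def by (subst sum.reindex[OF inj_V[OF m]]) (simp_all add: algebra_simps)
  also have "\<dots> = complex_of_real (\<Sum>a\<in>{-int m..int m}. cos (real_of_int a * (t * y / real m)))"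
    by (rule complex_eqI) (use sum_sin_range[where m=m and t="t*y/real m"] in \<open>simp_all add: Re_sum Im_sum\<close>)
  also have "(\<Sum>a\<in>{-int m..int m}. cos (real_of_int a * (t * y / real m))) = (2*real m+1) * cf m (t * y)"
    unfolding cf_def by simp
  finally show ?thesis .
qed

lemma char_prod:
  assumes m: "m \<ge> 1"
  shows "(\<Sum>g\<in>Om n m. cos (t * (\<Sum>i<n. g i * x i))) = (2*real m+1)^n * (\<Prod>i<n. cf m (t * x i))"
proof -
  have "(\<Sum>g\<in>Om n m. cis (t * (\<Sum>i<n. g i * x i))) = (\<Sum>g\<in>Om n m. \<Prod>i<n. cis (t * g i * x i))"
    by (intro sum.cong refl) (simp add: sum_distrib_left cis_sum mult.assoc)
  also have "\<dots> = (\<Prod>i<n. \<Sum>v\<in>Vset m. cis (t * v * x i))"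
    unfolding Om_def by (rule sum_PiE_dflt_prod) (auto simp: finite_V)
  also have "\<dots> = (\<Prod>i<n. complex_of_real ((2*real m+1) * cf m (t * x i)))"
    using sum_cis_V[OF m] by simp
  also have "\<dots> = complex_of_real ((2*real m+1)^n * (\<Prod>i<n. cf m (t * x i)))"
    by (simp add: prod.distrib)
  finally have h: "(\<Sum>g\<in>Om n m. cis (t * (\<Sum>i<n. g i * x i))) = complex_of_real ((2*real m+1)^n * (\<Prod>i<n. cf m (t * x i)))" .
  have "Re (\<Sum>g\<in>Om n m. cis (t * (\<Sum>i<n. g i * x i))) = (2*real m+1)^n * (\<Prod>i<n. cf m (t * x i))"
    unfolding h by (rule Re_complex_of_real)
  then show ?thesis by (simp add: Re_sum)
qed



lemma sum_inj_le:
  fixes f :: "'b \<Rightarrow> real"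
  assumes "inj_on h A" "h ` A \<subseteq> B" "finite B" "\<And>b. b \<in> B \<Longrightarrow> f b \<ge> 0"
  shows "(\<Sum>a\<in>A. f (h a)) \<le> (\<Sum>b\<in>B. f b)"
proof -
  have "(\<Sum>a\<in>A. f (h a)) = (\<Sum>b\<in>h`A. f b)" using sum.reindex[OF assms(1), of f] by simp
  also have "\<dots> \<le> (\<Sum>b\<in>B. f b)" using assms by (intro sum_mono2) auto
  finally show ?thesis .
qed

lemma sum_diff_le:
  fixes G :: "real \<Rightarrow> real"
  assumes ev: "\<And>t. G (-t) = G t" and nn: "\<And>t. G t \<ge> 0" and j: "j < N"
  shows "(\<Sum>l<N. G (real j - real l)) \<le> 2 * (\<Sum>d<N. G (real d))"
proof -
  have split: "{..<N} = {l. l<N \<and> l \<le> j} \<union> {l. l<N \<and> j < l}" by auto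
  have e0: "(\<Sum>l<N. G (real j - real l)) = (\<Sum>l\<in>{l. l<N \<and> l \<le> j}. G (real j - real l)) + (\<Sum>l\<in>{l. l<N \<and> j < l}. G (real j - real l))"
    by (subst split, rule sum.union_disjoint) auto
  have "(\<Sum>l\<in>{l. l<N \<and> l \<le> j}. G (real j - real l)) = (\<Sum>l\<in>{l. l<N \<and> l \<le> j}. G (real (j - l)))"
    by (intro sum.cong) (auto simp: of_nat_diff)
  also have "\<dots> \<le> (\<Sum>d<N. G (real d))"
  proof -
    have i1: "inj_on (\<lambda>l. j - l) {l. l<N \<and> l \<le> j}" by (rule inj_onI) auto
    have i2: "(\<lambda>l. j - l) ` {l. l<N \<and> l \<le> j} \<subseteq> {..<N}" using j by auto
    show ?thesis by (rule sum_inj_le[OF i1 i2 finite_lessThan nn])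
  qed
  finally have e1: "(\<Sum>l\<in>{l. l<N \<and> l \<le> j}. G (real j - real l)) \<le> (\<Sum>d<N. G (real d))" .
  have "(\<Sum>l\<in>{l. l<N \<and> j < l}. G (real j - real l)) = (\<Sum>l\<in>{l. l<N \<and> j < l}. G (real (l - j)))"
  proof (intro sum.cong refl)
    fix l assume "l \<in> {l. l<N \<and> j < l}"
    then have eq: "real j - real l = - real (l - j)" by (simp add: of_nat_diff)
    show "G (real j - real l) = G (real (l - j))" unfolding eq by (rule ev)
  qed
  also have "\<dots> \<le> (\<Sum>d<N. G (real d))"
  proof -
    have i1: "inj_on (\<lambda>l. l - j) {l. l<N \<and> j < l}" by (rule inj_onI) auto
    have i2: "(\<lambda>l. l - j) ` {l. l<N \<and> j < l} \<subseteq> {..<N}" by auto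
    show ?thesis by (rule sum_inj_le[OF i1 i2 finite_lessThan nn])
  qed
  finally have e2: "(\<Sum>l\<in>{l. l<N \<and> j < l}. G (real j - real l)) \<le> (\<Sum>d<N. G (real d))" .
  show ?thesis using e0 e1 e2 by linarith
qed

lemma amgm_w:
  fixes a w :: "'i \<Rightarrow> real"
  assumes fin: "finite I" and ne: "I \<noteq> {}" and wp: "\<And>i. i \<in> I \<Longrightarrow> w i > 0"
    and ws: "(\<Sum>i\<in>I. w i) = 1" and an: "\<And>i. i \<in> I \<Longrightarrow> a i \<ge> 0"
  shows "(\<Prod>i\<in>I. a i) \<le> (\<Sum>i\<in>I. w i * (a i powr (1 / w i)))"
proof (cases "\<exists>i\<in>I. a i = 0")
  case True
  then have "(\<Prod>i\<in>I. a i) = 0" using fin by simp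
  moreover have "0 \<le> (\<Sum>i\<in>I. w i * (a i powr (1 / w i)))"
    using wp by (intro sum_nonneg mult_nonneg_nonneg) (auto simp: less_imp_le)
  ultimately show ?thesis by simp
next
  case False
  then have pos: "\<And>i. i \<in> I \<Longrightarrow> a i > 0" using an by force
  have "(\<Prod>i\<in>I. a i) = (\<Prod>i\<in>I. exp (ln (a i)))" using pos by (intro prod.cong) auto
  also have "\<dots> = exp (\<Sum>i\<in>I. ln (a i))" by (rule exp_sum[OF fin, symmetric])
  also have "(\<Sum>i\<in>I. ln (a i)) = (\<Sum>i\<in>I. w i *\<^sub>R (ln (a i) / w i))"
  proof (intro sum.cong refl)
    fix i assume "i \<in> I"
    then have "w i > 0" by (rule wp)
    then show "ln (a i) = w i *\<^sub>R (ln (a i) / w i)" by simp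
  qed
  also have "exp \<dots> \<le> (\<Sum>i\<in>I. w i * exp (ln (a i) / w i))"
    by (rule convex_on_sum[OF fin ne exp_convex ws]) (use wp in \<open>auto simp: less_imp_le\<close>)
  also have "\<dots> = (\<Sum>i\<in>I. w i * (a i powr (1 / w i)))"
  proof (intro sum.cong refl)
    fix i assume "i \<in> I"
    then have "a i > 0" by (rule pos)
    then show "w i * exp (ln (a i) / w i) = w i * (a i powr (1 / w i))" by (simp add: powr_def)
  qed
  finally show ?thesis .
qed

lemma T_bound:
  fixes n :: nat and x :: "nat \<Rightarrow> real"
  assumes m1: "m \<ge> 1" and xs: "(\<Sum>i<n. (x i)^2) = 1" and sm: "\<And>j. j < n \<Longrightarrow> (x j)^2 \<le> 1/2"
    and N: "N \<le> m"
  shows "(\<Sum>d<N. \<Prod>i<n. \<bar>cf m (real d * x i)\<bar>) \<le> 15"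
proof -
  define I where "I = {i\<in>{..<n}. x i \<noteq> 0}"
  have finI: "finite I" unfolding I_def by simp
  have sI: "(\<Sum>i\<in>I. (x i)^2) = 1"
  proof -
    have "(\<Sum>i<n. (x i)^2) = (\<Sum>i\<in>I. (x i)^2)"
      unfolding I_def by (rule sum.mono_neutral_right) auto
    then show ?thesis using xs by simp
  qed
  have neI: "I \<noteq> {}" using sI by auto
  have pt: "(\<Prod>i<n. \<bar>cf m (real d * x i)\<bar>) \<le> (\<Sum>i\<in>I. (x i)^2 * (\<bar>cf m (real d * x i)\<bar> powr (1 / (x i)^2)))" for d
  proof -
    have "(\<Prod>i<n. \<bar>cf m (real d * x i)\<bar>) = (\<Prod>i\<in>I. \<bar>cf m (real d * x i)\<bar>)"
      unfolding I_def by (rule prod.mono_neutral_right) (auto simp: cf_zero)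
    also have "\<dots> \<le> (\<Sum>i\<in>I. (x i)^2 * (\<bar>cf m (real d * x i)\<bar> powr (1 / (x i)^2)))"
      by (rule amgm_w[OF finI neI _ sI]) (auto simp: I_def)
    finally show ?thesis .
  qed
  have "(\<Sum>d<N. \<Prod>i<n. \<bar>cf m (real d * x i)\<bar>) \<le> (\<Sum>d<N. \<Sum>i\<in>I. (x i)^2 * (\<bar>cf m (real d * x i)\<bar> powr (1 / (x i)^2)))"
    by (intro sum_mono pt)
  also have "\<dots> = (\<Sum>i\<in>I. (x i)^2 * (\<Sum>d<N. \<bar>cf m (real d * x i)\<bar> powr (1 / (x i)^2)))"
    by (subst sum.swap) (simp add: sum_distrib_left)
  also have "\<dots> \<le> (\<Sum>i\<in>I. (x i)^2 * 15)"
  proof (intro sum_mono mult_left_mono)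
    fix i assume i: "i \<in> I"
    have i1: "i < n" and i2: "x i \<noteq> 0" using i by (auto simp: I_def)
    have i3: "(x i)^2 \<le> 1/2" by (rule sm[OF i1])
    show "(\<Sum>d<N. \<bar>cf m (real d * x i)\<bar> powr (1 / (x i)^2)) \<le> 15"
      by (rule B_bound[OF m1 i2 i3 N])
  qed simp
  also have "\<dots> = 15" using sI by (simp add: sum_distrib_right[symmetric])
  finally show ?thesis .
qed



lemma card_int_diam:
  fixes S :: "int set"
  assumes fin: "finite S" and diam: "\<And>a b. a \<in> S \<Longrightarrow> b \<in> S \<Longrightarrow> real_of_int (a - b) \<le> L" and L: "L \<ge> 0"
  shows "real (card S) \<le> L + 1"
proof (cases "S = {}")
  case True then show ?thesis using L by simp
next
  case False
  define lo where "lo = Min S"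
  define hi where "hi = Max S"
  have lo: "lo \<in> S" and hi: "hi \<in> S" unfolding lo_def hi_def using fin False by auto
  have sub: "S \<subseteq> {lo..hi}" unfolding lo_def hi_def using fin by auto
  have "card S \<le> card {lo..hi}" by (rule card_mono[OF _ sub]) simp
  also have "card {lo..hi} = nat (hi - lo + 1)" by simp
  finally have "real (card S) \<le> real (nat (hi - lo + 1))" by simp
  also have "\<dots> = real_of_int (hi - lo) + 1" using lo hi sub by auto
  also have "\<dots> \<le> L + 1" using diam[OF hi lo] by simp
  finally show ?thesis .
qed

lemma fin_filt: "finite {a\<in>{-int m..int m}. P a}"
  by (rule finite_subset[of _ "{-int m..int m}"]) auto

lemma count_fiber:
  assumes c: "c \<noteq> 0" and e: "\<epsilon> \<ge> 0"
  shows "real (card {a\<in>{-int m..int m}. \<bar>real_of_int a * c + r\<bar> \<le> \<epsilon>}) \<le> 2 * \<epsilon> / \<bar>c\<bar> + 1"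
proof (rule card_int_diam)
  fix a b assume a: "a \<in> {a\<in>{-int m..int m}. \<bar>real_of_int a * c + r\<bar> \<le> \<epsilon>}"
    and b: "b \<in> {a\<in>{-int m..int m}. \<bar>real_of_int a * c + r\<bar> \<le> \<epsilon>}"
  have "\<bar>real_of_int (a - b) * c\<bar> = \<bar>(real_of_int a * c + r) - (real_of_int b * c + r)\<bar>"
    by (simp add: algebra_simps)
  also have "\<dots> \<le> \<bar>real_of_int a * c + r\<bar> + \<bar>real_of_int b * c + r\<bar>" by (rule abs_triangle_ineq4)
  also have "\<dots> \<le> 2 * \<epsilon>" using a b by simp
  finally have "\<bar>real_of_int (a - b)\<bar> * \<bar>c\<bar> \<le> 2 * \<epsilon>" by (simp add: abs_mult)
  then have "\<bar>real_of_int (a - b)\<bar> \<le> 2 * \<epsilon> / \<bar>c\<bar>" using c by (simp add: pos_le_divide_eq)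
  then show "real_of_int (a - b) \<le> 2 * \<epsilon> / \<bar>c\<bar>" by simp
qed (use e c fin_filt in auto)

lemma big_coord:
  assumes m1: "m \<ge> 1" and eps1: "1 / real m \<le> \<epsilon>" and j: "j < n" and xj: "(x j)^2 > 1/2"
  shows "measure_pmf.prob (Dn_pmf n m) {X. \<bar>\<Sum>i<n. X i * x i\<bar> \<le> \<epsilon>} \<le> 5/2 * \<epsilon>"
proof -
  define M where "M = real m"
  have mpos: "M > 0" using m1 unfolding M_def by simp
  have epos: "\<epsilon> > 0" using eps1 mpos unfolding M_def[symmetric] by (smt (verit) divide_pos_pos)
  have em: "\<epsilon> * M \<ge> 1" using eps1 mpos unfolding M_def[symmetric] by (simp add: divide_le_eq)
  have xj2: "\<bar>x j\<bar> > 1/2"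
  proof (rule ccontr)
    assume "\<not> \<bar>x j\<bar> > 1/2"
    then have "\<bar>x j\<bar>^2 \<le> (1/2)^2" by (intro power_mono) auto
    then show False using xj by (simp add: power2_eq_square)
  qed
  define S where "S = (\<lambda>g::nat\<Rightarrow>real. \<Sum>i<n. g i * x i)"
  define E where "E = {X. \<bar>S X\<bar> \<le> \<epsilon>}"
  define A' where "A' = {..<n} - {j}"
  define Om' where "Om' = PiE_dflt A' 0 (\<lambda>_. Vset m)"
  define F where "F = (\<lambda>h. (\<lambda>a::int. real_of_int a / real m) ` {a\<in>{-int m..int m}. \<bar>real_of_int a * (x j / M) + S h\<bar> \<le> \<epsilon>})"
  define \<phi> where "\<phi> = (\<lambda>g::nat\<Rightarrow>real. (g(j:=0), g j))"
  have finOm': "finite Om'" unfolding Om'_def A'_def using finite_V by auto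
  have Ssplit: "S g = g j * x j + S (g(j:=0))" for g
  proof -
    have "S g = g j * x j + (\<Sum>i\<in>{..<n}-{j}. g i * x i)" unfolding S_def using j
      by (subst sum.remove[of _ j]) auto
    moreover have "S (g(j:=0)) = (\<Sum>i\<in>{..<n}-{j}. g i * x i)" unfolding S_def using j
      by (subst sum.remove[of _ j]) auto
    ultimately show ?thesis by simp
  qed
  have img: "\<phi> ` (Om n m \<inter> E) \<subseteq> Sigma Om' F"
  proof
    fix p assume "p \<in> \<phi> ` (Om n m \<inter> E)"
    then obtain g where g: "g \<in> Om n m" "g \<in> E" and p: "p = \<phi> g" by auto
    have gV: "g j \<in> Vset m" using g(1) j unfolding Om_def PiE_dflt_def by auto
    have h': "g(j:=0) \<in> Om'" using g(1) unfolding Om_def Om'_def PiE_dflt_def A'_def by auto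
    from gV obtain a where a: "a \<in> {-int m..int m}" "g j = real_of_int a / real m" unfolding Vset_def by auto
    have "\<bar>real_of_int a * (x j / M) + S (g(j:=0))\<bar> \<le> \<epsilon>"
      using g(2) a(2) Ssplit[of g] unfolding E_def M_def by (simp add: algebra_simps)
    then have "g j \<in> F (g(j:=0))" unfolding F_def using a by auto
    then show "p \<in> Sigma Om' F" using p h' unfolding \<phi>_def by auto
  qed
  have inj: "inj_on \<phi> (Om n m \<inter> E)"
  proof (rule inj_onI)
    fix g g' assume "\<phi> g = \<phi> g'"
    then have "g j = g' j" "g(j:=0) = g'(j:=0)" unfolding \<phi>_def by auto
    then show "g = g'" by (metis fun_upd_triv fun_upd_upd)
  qed
  have cardF: "real (card (F h)) \<le> 5 * \<epsilon> * M" for h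
  proof -
    have "real (card (F h)) \<le> real (card {a\<in>{-int m..int m}. \<bar>real_of_int a * (x j / M) + S h\<bar> \<le> \<epsilon>})"
      unfolding F_def by (intro of_nat_mono card_image_le fin_filt)
    also have "\<dots> \<le> 2 * \<epsilon> / \<bar>x j / M\<bar> + 1"
      by (rule count_fiber) (use xj2 epos mpos in auto)
    also have "2 * \<epsilon> / \<bar>x j / M\<bar> = 2 * \<epsilon> * M / \<bar>x j\<bar>" using mpos by (simp add: abs_divide)
    also have "\<dots> \<le> 2 * \<epsilon> * M / (1/2)"
    proof -
      have "0 \<le> 2 * \<epsilon> * M" using epos mpos by simp
      moreover have "0 < \<bar>x j\<bar> * (1/2)" using xj2 by simp
      ultimately show ?thesis using xj2 by (intro divide_left_mono) auto
    qed
    finally show ?thesis using em by simp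
  qed
  have "card (Om n m \<inter> E) = card (\<phi> ` (Om n m \<inter> E))" by (rule card_image[OF inj, symmetric])
  also have "\<dots> \<le> card (Sigma Om' F)"
    by (rule card_mono[OF _ img], rule finite_SigmaI[OF finOm'], unfold F_def, rule finite_imageI, rule fin_filt)
  also have "\<dots> = (\<Sum>h\<in>Om'. card (F h))" by (rule card_SigmaI[OF finOm'], unfold F_def, intro ballI finite_imageI fin_filt)
  finally have c1: "real (card (Om n m \<inter> E)) \<le> (\<Sum>h\<in>Om'. real (card (F h)))"
    by (metis of_nat_le_iff of_nat_sum)
  also have "\<dots> \<le> (\<Sum>h\<in>Om'. 5 * \<epsilon> * M)" by (intro sum_mono cardF)
  also have "\<dots> = real (card Om') * (5 * \<epsilon> * M)" by simp
  finally have c2: "real (card (Om n m \<inter> E)) \<le> real (card Om') * (5 * \<epsilon> * M)" .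
  have cOm': "card Om' = (2*m+1)^(n-1)"
  proof -
    have "card A' = n - 1" unfolding A'_def using j by simp
    then show ?thesis unfolding Om'_def by (subst card_PiE_dflt) (auto simp: A'_def finite_V card_V[OF m1])
  qed
  have cOm: "card (Om n m) = (2*m+1) * card Om'"
    unfolding card_Om[OF m1] cOm' using j by (cases n) auto
  have pos': "real (card Om') > 0" unfolding cOm' by simp
  have "measure_pmf.prob (Dn_pmf n m) E = real (card (Om n m \<inter> E)) / real (card (Om n m))"
    by (rule prob_Dn)
  also have "\<dots> \<le> real (card Om') * (5 * \<epsilon> * M) / ((2*M+1) * real (card Om'))"
  proof -
    have cOmr: "real (card (Om n m)) = (2*M+1) * real (card Om')" unfolding cOm M_def by (simp add: algebra_simps)
    show ?thesis unfolding cOmr using c2 mpos pos' by (intro divide_right_mono) auto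
  qed
  also have "\<dots> = 5 * \<epsilon> * M / (2*M+1)" using pos' by simp
  also have "\<dots> \<le> 5/2 * \<epsilon>" using mpos epos by (simp add: divide_le_eq algebra_simps)
  finally show ?thesis unfolding E_def S_def .
qed



lemma F_expand:
  "(\<Sum>j<N. cos (real j * s))^2 + (\<Sum>j<N. sin (real j * s))^2 = (\<Sum>j<N. \<Sum>l<N. cos ((real j - real l) * s))"
proof -
  have "(\<Sum>j<N. cos (real j * s))^2 = (\<Sum>j<N. \<Sum>l<N. cos (real j * s) * cos (real l * s))"
    by (simp add: power2_eq_square sum_product)
  moreover have "(\<Sum>j<N. sin (real j * s))^2 = (\<Sum>j<N. \<Sum>l<N. sin (real j * s) * sin (real l * s))"
    by (simp add: power2_eq_square sum_product)
  moreover have "cos ((real j - real l) * s) = cos (real j * s) * cos (real l * s) + sin (real j * s) * sin (real l * s)" for j l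
    by (simp add: left_diff_distrib cos_diff)
  ultimately show ?thesis by (simp add: sum.distrib[symmetric])
qed

lemma F_big:
  assumes s: "\<bar>s\<bar> \<le> \<epsilon>" and N: "real N * \<epsilon> \<le> 1"
  shows "(real N)^2 / 4 \<le> (\<Sum>j<N. cos (real j * s))^2 + (\<Sum>j<N. sin (real j * s))^2"
proof -
  have c: "1/2 \<le> cos (real j * s)" if "j < N" for j
  proof -
    have "\<bar>real j * s\<bar> \<le> real N * \<epsilon>"
    proof -
      have "\<bar>real j * s\<bar> = real j * \<bar>s\<bar>" by (simp add: abs_mult)
      also have "\<dots> \<le> real N * \<epsilon>" using that s by (intro mult_mono) auto
      finally show ?thesis .
    qed
    then have "\<bar>real j * s\<bar> \<le> 1" using N by simp
    then have "\<bar>real j * s\<bar>^2 \<le> 1^2" by (intro power_mono) auto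
    then have "(real j * s)^2 \<le> 1" by simp
    then show ?thesis using cos_lower[of "real j * s"] by simp
  qed
  have "real N / 2 = (\<Sum>j<N. 1/2::real)" by simp
  also have "\<dots> \<le> (\<Sum>j<N. cos (real j * s))" by (intro sum_mono c) simp
  finally have "(real N / 2)^2 \<le> (\<Sum>j<N. cos (real j * s))^2" by (intro power_mono) auto
  moreover have "(real N / 2)^2 = (real N)^2 / 4" by (simp add: power_divide)
  moreover have "0 \<le> (\<Sum>j<N. sin (real j * s))^2" by simp
  ultimately show ?thesis by linarith
qed

lemma small_coords:
  assumes m1: "m \<ge> 1" and eps1: "1 / real m \<le> \<epsilon>" and eh: "\<epsilon> \<le> 1/2"
    and xs: "(\<Sum>i<n. (x i)^2) = 1" and sm: "\<And>j. j < n \<Longrightarrow> (x j)^2 \<le> 1/2"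
  shows "measure_pmf.prob (Dn_pmf n m) {X. \<bar>\<Sum>i<n. X i * x i\<bar> \<le> \<epsilon>} \<le> 240 * \<epsilon>"
proof -
  define M where "M = real m"
  have mpos: "M > 0" using m1 unfolding M_def by simp
  have epos: "\<epsilon> > 0" using eps1 mpos unfolding M_def[symmetric] by (smt (verit) divide_pos_pos)
  have ie: "1/\<epsilon> \<le> M" using eps1 mpos epos unfolding M_def[symmetric] by (simp add: field_simps)
  have ie2: "1/\<epsilon> \<ge> 2" using eh epos by (simp add: field_simps)
  define N where "N = nat \<lfloor>1/\<epsilon>\<rfloor>"
  have N1: "real N \<le> 1/\<epsilon>" unfolding N_def using ie2 by linarith
  have N2: "real N > 1/\<epsilon> - 1" unfolding N_def using ie2 by linarith
  have Nge: "real N \<ge> 1/(2*\<epsilon>)" using N2 ie2 by (simp add: field_simps)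
  have Npos: "real N > 0" using Nge epos by (smt (verit) divide_pos_pos)
  have NM: "N \<le> m" using N1 ie unfolding M_def by linarith
  have Ne: "real N * \<epsilon> \<le> 1" using N1 epos by (simp add: field_simps)
  define S where "S = (\<lambda>g::nat\<Rightarrow>real. \<Sum>i<n. g i * x i)"
  define F where "F = (\<lambda>s::real. (\<Sum>j<N. cos (real j * s))^2 + (\<Sum>j<N. sin (real j * s))^2)"
  define G where "G = (\<lambda>t::real. \<Prod>i<n. \<bar>cf m (t * x i)\<bar>)"
  define T where "T = (\<Sum>d<N. G (real d))"
  have Gev: "G (-t) = G t" for t unfolding G_def
    by (intro prod.cong refl) (metis cf_even minus_mult_left)
  have Gnn: "G t \<ge> 0" for t unfolding G_def by (intro prod_nonneg) auto
  have T15: "T \<le> 15" unfolding T_def G_def using T_bound[OF m1 xs sm NM] by simp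
  have Fnn: "F s \<ge> 0" for s unfolding F_def by simp
  have "real (card (Om n m \<inter> {X. \<bar>S X\<bar> \<le> \<epsilon>})) = (\<Sum>g\<in>Om n m \<inter> {X. \<bar>S X\<bar> \<le> \<epsilon>}. 1)" by simp
  also have "\<dots> \<le> (\<Sum>g\<in>Om n m \<inter> {X. \<bar>S X\<bar> \<le> \<epsilon>}. 4 / (real N)^2 * F (S g))"
  proof (intro sum_mono)
    fix g assume "g \<in> Om n m \<inter> {X. \<bar>S X\<bar> \<le> \<epsilon>}"
    then have "(real N)^2 / 4 \<le> F (S g)" unfolding F_def using F_big[OF _ Ne] by auto
    then show "1 \<le> 4 / (real N)^2 * F (S g)" using Npos by (simp add: field_simps)
  qed
  also have "\<dots> \<le> (\<Sum>g\<in>Om n m. 4 / (real N)^2 * F (S g))"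
    using Fnn by (intro sum_mono2) (auto simp: finite_Om)
  also have "\<dots> = 4 / (real N)^2 * (\<Sum>j<N. \<Sum>l<N. \<Sum>g\<in>Om n m. cos ((real j - real l) * S g))"
  proof -
    have sw: "(\<Sum>g\<in>Om n m. \<Sum>j<N. \<Sum>l<N. cos ((real j - real l) * S g)) = (\<Sum>j<N. \<Sum>l<N. \<Sum>g\<in>Om n m. cos ((real j - real l) * S g))"
    proof -
      have "(\<Sum>g\<in>Om n m. \<Sum>j<N. \<Sum>l<N. cos ((real j - real l) * S g)) = (\<Sum>j<N. \<Sum>g\<in>Om n m. \<Sum>l<N. cos ((real j - real l) * S g))"
        by (rule sum.swap)
      also have "\<dots> = (\<Sum>j<N. \<Sum>l<N. \<Sum>g\<in>Om n m. cos ((real j - real l) * S g))"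
        by (intro sum.cong refl) (rule sum.swap)
      finally show ?thesis .
    qed
    have "(\<Sum>g\<in>Om n m. 4 / (real N)^2 * F (S g)) = 4 / (real N)^2 * (\<Sum>g\<in>Om n m. F (S g))"
      by (rule sum_distrib_left[symmetric])
    also have "(\<Sum>g\<in>Om n m. F (S g)) = (\<Sum>g\<in>Om n m. \<Sum>j<N. \<Sum>l<N. cos ((real j - real l) * S g))"
      unfolding F_def by (intro sum.cong refl F_expand)
    finally show ?thesis unfolding sw .
  qed
  finally have cA: "real (card (Om n m \<inter> {X. \<bar>S X\<bar> \<le> \<epsilon>})) \<le> 4 / (real N)^2 * (\<Sum>j<N. \<Sum>l<N. \<Sum>g\<in>Om n m. cos ((real j - real l) * S g))" .
  have "(\<Sum>j<N. \<Sum>l<N. \<Sum>g\<in>Om n m. cos ((real j - real l) * S g))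
      = (\<Sum>j<N. \<Sum>l<N. (2*M+1)^n * (\<Prod>i<n. cf m ((real j - real l) * x i)))"
    unfolding S_def M_def by (simp add: char_prod[OF m1])
  also have "\<dots> \<le> (\<Sum>j<N. \<Sum>l<N. (2*M+1)^n * G (real j - real l))"
  proof (intro sum_mono mult_left_mono)
    fix j l
    have "(\<Prod>i<n. cf m ((real j - real l) * x i)) \<le> \<bar>\<Prod>i<n. cf m ((real j - real l) * x i)\<bar>" by simp
    also have "\<dots> = G (real j - real l)" unfolding G_def by (simp add: abs_prod)
    finally show "(\<Prod>i<n. cf m ((real j - real l) * x i)) \<le> G (real j - real l)" .
  qed (use mpos in simp)
  also have "\<dots> = (2*M+1)^n * (\<Sum>j<N. \<Sum>l<N. G (real j - real l))"
    by (simp add: sum_distrib_left)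
  also have "\<dots> \<le> (2*M+1)^n * (\<Sum>j<N. 2 * T)"
    unfolding T_def using mpos
    by (intro mult_left_mono sum_mono sum_diff_le[of G]) (auto simp: Gev Gnn)
  also have "\<dots> = (2*M+1)^n * (2 * real N * T)" by simp
  finally have cB: "(\<Sum>j<N. \<Sum>l<N. \<Sum>g\<in>Om n m. cos ((real j - real l) * S g)) \<le> (2*M+1)^n * (2 * real N * T)" .
  have cE: "real (card (Om n m \<inter> {X. \<bar>S X\<bar> \<le> \<epsilon>})) \<le> 4 / (real N)^2 * ((2*M+1)^n * (2 * real N * T))"
    using cA mult_left_mono[OF cB, of "4 / (real N)^2"] by simp
  have cO: "real (card (Om n m)) = (2*M+1)^n" unfolding card_Om[OF m1] M_def by (simp add: add.commute)
  have "measure_pmf.prob (Dn_pmf n m) {X. \<bar>S X\<bar> \<le> \<epsilon>} = real (card (Om n m \<inter> {X. \<bar>S X\<bar> \<le> \<epsilon>})) / real (card (Om n m))"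
    by (rule prob_Dn)
  also have "\<dots> \<le> 4 / (real N)^2 * ((2*M+1)^n * (2 * real N * T)) / (2*M+1)^n"
    using cE unfolding cO by (intro divide_right_mono) (use mpos in auto)
  also have "\<dots> = 8 * T / real N" using Npos mpos by (simp add: power2_eq_square)
  also have "\<dots> \<le> 8 * 15 / real N" using T15 Npos by (intro divide_right_mono) auto
  also have "\<dots> \<le> 8 * 15 * (2 * \<epsilon>)"
  proof -
    have h: "1 / real N \<le> 2 * \<epsilon>" using Nge Npos epos by (simp add: field_simps)
    show ?thesis using mult_left_mono[OF h, of "8*15"] by simp
  qed
  also have "\<dots> = 240 * \<epsilon>" by simp
  finally show ?thesis unfolding S_def .
qed

theorem claim3p3:
  shows "\<exists>c>0. \<forall>(n::nat) (m::nat) (x::nat \<Rightarrow> real) (\<epsilon>::real).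
    n \<ge> 1 \<longrightarrow> m \<ge> 2 \<longrightarrow> (\<Sum>i<n. (x i)\<^sup>2) = 1 \<longrightarrow>
    \<epsilon> \<ge> sqrt (log 2 (real m)) / real m \<longrightarrow>
    measure_pmf.prob (Dn_pmf n m) {X. \<bar>\<Sum>i<n. X i * x i\<bar> \<le> \<epsilon>} \<le> c * \<epsilon>"
proof (intro exI[of _ "240::real"] conjI allI impI)
  fix n m :: nat and x :: "nat \<Rightarrow> real" and \<epsilon> :: real
  assume n1: "n \<ge> 1" and m2: "m \<ge> 2" and xs: "(\<Sum>i<n. (x i)\<^sup>2) = 1"
    and eps: "\<epsilon> \<ge> sqrt (log 2 (real m)) / real m"
  have m1: "m \<ge> 1" using m2 by simp
  have mpos: "real m > 0" using m1 by simp
  have "log 2 (real m) \<ge> log 2 2" using m2 by (subst log_le_cancel_iff) auto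
  then have lg: "log 2 (real m) \<ge> 1" by simp
  have "sqrt 1 \<le> sqrt (log 2 (real m))" using lg by (rule real_sqrt_le_mono)
  then have "1 / real m \<le> sqrt (log 2 (real m)) / real m" using mpos by (intro divide_right_mono) auto
  then have eps1: "1 / real m \<le> \<epsilon>" using eps by linarith
  have epos: "\<epsilon> > 0" using eps1 mpos by (smt (verit) divide_pos_pos)
  show "measure_pmf.prob (Dn_pmf n m) {X. \<bar>\<Sum>i<n. X i * x i\<bar> \<le> \<epsilon>} \<le> 240 * \<epsilon>"
  proof (cases "\<epsilon> > 1/2")
    case True
    have "measure_pmf.prob (Dn_pmf n m) {X. \<bar>\<Sum>i<n. X i * x i\<bar> \<le> \<epsilon>} \<le> 1" by simp
    then show ?thesis using True by linarith
  next
    case False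
    then have eh: "\<epsilon> \<le> 1/2" by simp
    show ?thesis
    proof (cases "\<exists>j<n. (x j)^2 > 1/2")
      case True
      then obtain j where j: "j < n" "(x j)^2 > 1/2" by auto
      have "measure_pmf.prob (Dn_pmf n m) {X. \<bar>\<Sum>i<n. X i * x i\<bar> \<le> \<epsilon>} \<le> 5/2 * \<epsilon>"
        by (rule big_coord[where x=x and j=j]) (use m1 eps1 j in auto)
      then show ?thesis using epos by simp
    next
      case False
      have sm: "\<And>j. j < n \<Longrightarrow> (x j)^2 \<le> 1/2" using False by (meson not_less)
      show ?thesis by (rule small_coords[where x=x and n=n and m=m and \<epsilon>=\<epsilon>, OF m1 eps1 eh xs sm])
    qed
  qed
qed simp


end
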